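(* With the notation and hypotheses on $A_\kappa,B_\kappa,W_P,W_Q,D_P,D_Q,\lambda_2$ and the function $F$ as in the context, let $V'\in\mathbb{R}^{n\times k}$ have strictly positive entries, and for $V\in\mathbb{R}^{n\times k}$ with strictly positive entries define $$\begin{aligned}J(V,V')=\sum_{\kappa=1}^{2}\Big[&-2\sum_{i,s}(B_\kappa^+)_{is}v'_{is}\Big(1+\log\frac{v_{is}}{v'_{is}}\Big)+\sum_{i,s}(B_\kappa^-)_{is}\frac{v_{is}^2+v_{is}'^2}{v'_{is}}+\sum_{i,s}\frac{(V'A_\kappa^+)_{is}v_{is}^2}{v'_{is}}\\&-\sum_{i,s,l}(A_\kappa^-)_{sl}v'_{is}v'_{il}\Big(1+\log\frac{v_{is}v_{il}}{v'_{is}v'_{il}}\Big)\Big]\\ +\lambda_2\sum_{G\in\{P,Q\}}\Big[&\sum_{i,s}\frac{(D_GV')_{is}v_{is}^2}{v'_{is}}-\sum_{j,l,s}(W_G)_{jl}v'_{js}v'_{ls}\Big(1+\log\frac{v_{js}v_{ls}}{v'_{js}v'_{ls}}\Big)\Big].\end{aligned}$$ Then (i) $J(V,V')\ge F(V)$ and $J(V,V)=F(V)$ for all such $V,V'$, i.e. $J$ is an auxiliary function for $F$; (ii) $J(\cdot,V')$ is convex on the open positive orthant; and (iii) if the matrices $\Delta_1=B_1^++B_2^++V'(A_1^-+A_2^-)+\lambda_2(W_P+W_Q)V'$ and $\Delta_2=B_1^-+B_2^-+V'(A_1^++A_2^+)+\lambda_2(D_P+D_Q)V'$ have strictly positive entries,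 then the global minimizer of $J(\cdot,V')$ over the positive orthant is given by $v_{ij}=v'_{ij}\sqrt{(\Delta_1)_{ij}/(\Delta_2)_{ij}}$.
   Context: Setting: $n,k\ge1$, $\lambda_2\ge0$; $A_1,A_2\in\mathbb{R}^{k\times k}$ symmetric; $B_1,B_2\in\mathbb{R}^{n\times k}$; $W_P,W_Q\in\mathbb{R}^{n\times n}$ symmetric with nonnegative entries; $D_P,D_Q$ diagonal with $(D_G)_{ii}=\sum_j(W_G)_{ij}$. For a real matrix $M$, $M^+_{ij}=(|M_{ij}|+M_{ij})/2$ and $M^-_{ij}=(|M_{ij}|-M_{ij})/2$. For $V=[v_{ij}]\in\mathbb{R}^{n\times k}$, $F(V)=\mathrm{Tr}\big(-2V^TB_1^+ + 2V^TB_1^- + VA_1^+V^T - VA_1^-V^T - 2V^TB_2^+ + 2V^TB_2^- + VA_2^+V^T - VA_2^-V^T + \lambda_2 V^TD_PV - \lambda_2 V^TW_PV + \lambda_2 V^TD_QV - \lambda_2 V^TW_QV\big)$. *)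

theory Defs
  imports "HOL-Analysis.Analysis"
begin

text \<open>Matrices are rendered as Cartesian-product types: an n-by-k real matrix is
  a value of type real^'k^'n (row index in 'n, column index in 'k), so
  M $ i $ j is the entry in row i, column j.\<close>

definition pospart :: "real^'c^'r \<Rightarrow> real^'c^'r" where
  "pospart M = (\<chi> i j. (\<bar>M $ i $ j\<bar> + M $ i $ j) / 2)"

definition negpart :: "real^'c^'r \<Rightarrow> real^'c^'r" where
  "negpart M = (\<chi> i j. (\<bar>M $ i $ j\<bar> - M $ i $ j) / 2)"

definition degmat :: "real^'n^'n \<Rightarrow> real^'n^'n" where
  "degmat W = (\<chi> i j. if i = j then (\<Sum>l\<in>UNIV. W $ i $ l) else 0)"

definition posorth :: "(real^'c^'r) set" where
  "posorth = {V. \<forall>i j. V $ i $ j > 0}"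

text \<open>The objective F (trace of a sum = sum of traces of the square summands).\<close>
definition Fobj ::
  "real \<Rightarrow> real^'k^'k \<Rightarrow> real^'k^'k \<Rightarrow> real^'k^'n \<Rightarrow> real^'k^'n
     \<Rightarrow> real^'n^'n \<Rightarrow> real^'n^'n \<Rightarrow> real^'k^'n \<Rightarrow> real" where
  "Fobj lam2 A1 A2 B1 B2 WP WQ V =
     - 2 * trace (transpose V ** pospart B1) + 2 * trace (transpose V ** negpart B1)
     + trace (V ** pospart A1 ** transpose V) - trace (V ** negpart A1 ** transpose V)
     - 2 * trace (transpose V ** pospart B2) + 2 * trace (transpose V ** negpart B2)
     + trace (V ** pospart A2 ** transpose V) - trace (V ** negpart A2 ** transpose V)
     + lam2 * trace (transpose V ** degmat WP ** V) - lam2 * trace (transpose V ** WP ** V)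
     + lam2 * trace (transpose V ** degmat WQ ** V) - lam2 * trace (transpose V ** WQ ** V)"

definition Jpart :: "real^'k^'k \<Rightarrow> real^'k^'n \<Rightarrow> real^'k^'n \<Rightarrow> real^'k^'n \<Rightarrow> real" where
  "Jpart A B V V' =
     - 2 * (\<Sum>i\<in>UNIV. \<Sum>s\<in>UNIV. pospart B $ i $ s * V' $ i $ s
              * (1 + ln (V $ i $ s / V' $ i $ s)))
     + (\<Sum>i\<in>UNIV. \<Sum>s\<in>UNIV. negpart B $ i $ s
              * ((V $ i $ s)\<^sup>2 + (V' $ i $ s)\<^sup>2) / V' $ i $ s)
     + (\<Sum>i\<in>UNIV. \<Sum>s\<in>UNIV. (V' ** pospart A) $ i $ s * (V $ i $ s)\<^sup>2 / V' $ i $ s)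
     - (\<Sum>i\<in>UNIV. \<Sum>s\<in>UNIV. \<Sum>l\<in>UNIV. negpart A $ s $ l * V' $ i $ s * V' $ i $ l
              * (1 + ln ((V $ i $ s * V $ i $ l) / (V' $ i $ s * V' $ i $ l))))"

definition Jgraph :: "real^'n^'n \<Rightarrow> real^'k^'n \<Rightarrow> real^'k^'n \<Rightarrow> real" where
  "Jgraph W V V' =
     (\<Sum>i\<in>UNIV. \<Sum>s\<in>UNIV. (degmat W ** V') $ i $ s * (V $ i $ s)\<^sup>2 / V' $ i $ s)
     - (\<Sum>j\<in>UNIV. \<Sum>l\<in>UNIV. \<Sum>s\<in>UNIV. W $ j $ l * V' $ j $ s * V' $ l $ s
              * (1 + ln ((V $ j $ s * V $ l $ s) / (V' $ j $ s * V' $ l $ s))))"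

definition Jaux ::
  "real \<Rightarrow> real^'k^'k \<Rightarrow> real^'k^'k \<Rightarrow> real^'k^'n \<Rightarrow> real^'k^'n
     \<Rightarrow> real^'n^'n \<Rightarrow> real^'n^'n \<Rightarrow> real^'k^'n \<Rightarrow> real^'k^'n \<Rightarrow> real" where
  "Jaux lam2 A1 A2 B1 B2 WP WQ V V' =
     Jpart A1 B1 V V' + Jpart A2 B2 V V' + lam2 * (Jgraph WP V V' + Jgraph WQ V V')"

end

theory Submission
  imports Defs
begin


lemma mm_comp: "(X ** Z) $ i $ j = (\<Sum>k\<in>UNIV. X $ i $ k * Z $ k $ j)"
  by (simp add: matrix_matrix_mult_def)

lemma pp_comp: "pospart M $ i $ j = (\<bar>M $ i $ j\<bar> + M $ i $ j) / 2"
  by (simp add: pospart_def)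
lemma np_comp: "negpart M $ i $ j = (\<bar>M $ i $ j\<bar> - M $ i $ j) / 2"
  by (simp add: negpart_def)
lemma pp_nn: "pospart M $ i $ j \<ge> 0" by (simp add: pp_comp)
lemma np_nn: "negpart M $ i $ j \<ge> 0" by (simp add: np_comp)

lemma sym_comp: "transpose A = A \<Longrightarrow> A $ i $ j = A $ j $ i"
  by (metis transpose_def vec_lambda_beta)
lemma pp_sym: "transpose A = A \<Longrightarrow> pospart A $ i $ j = pospart A $ j $ i"
  by (simp add: pp_comp sym_comp[of A i j])
lemma np_sym: "transpose A = A \<Longrightarrow> negpart A $ i $ j = negpart A $ j $ i"
  by (simp add: np_comp sym_comp[of A i j])

lemma posorthD: "V \<in> posorth \<Longrightarrow> V $ i $ j > 0"
  by (simp add: posorth_def)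

definition sep :: "('n \<Rightarrow> 'k \<Rightarrow> real) \<Rightarrow> ('n \<Rightarrow> 'k \<Rightarrow> real) \<Rightarrow> real^'k^'n \<Rightarrow> real" where
  "sep a b V = (\<Sum>i\<in>UNIV. \<Sum>s\<in>UNIV. a i s * (V$i$s)\<^sup>2 - b i s * ln (V$i$s))"

lemma sep_add: "sep a1 b1 V + sep a2 b2 V = sep (\<lambda>i s. a1 i s + a2 i s) (\<lambda>i s. b1 i s + b2 i s) V"
  by (simp add: sep_def sum.distrib[symmetric] algebra_simps)
lemma sep_scale: "c * sep a b V = sep (\<lambda>i s. c * a i s) (\<lambda>i s. c * b i s) V"
  by (simp add: sep_def sum_distrib_left algebra_simps)
lemma sep_cong: "(\<And>i s. a i s = a' i s) \<Longrightarrow> (\<And>i s. b i s = b' i s) \<Longrightarrow> sep a b V = sep a' b' V"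
  by (simp add: sep_def)

lemma phi_convex:
  fixes a b x y u v :: real
  assumes "a \<ge> 0" "b \<ge> 0" "x > 0" "y > 0" "u \<ge> 0" "v \<ge> 0" "u + v = 1"
  shows "a * (u * x + v * y)\<^sup>2 - b * ln (u * x + v * y) \<le> u * (a * x\<^sup>2 - b * ln x) + v * (a * y\<^sup>2 - b * ln y)"
proof -
  have sq: "(u * x + v * y)\<^sup>2 \<le> u * x\<^sup>2 + v * y\<^sup>2"
  proof -
    have "u * x\<^sup>2 + v * y\<^sup>2 - (u * x + v * y)\<^sup>2 = u * v * (x - y)\<^sup>2"
    proof -
      have v: "v = 1 - u" using assms(7) by simp
      show ?thesis unfolding v by (simp add: power2_eq_square algebra_simps)
    qed
    moreover have "u * v * (x - y)\<^sup>2 \<ge> 0" using assms by simp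
    ultimately show ?thesis by linarith
  qed
  have ln: "u * ln x + v * ln y \<le> ln (u * x + v * y)"
    using ln_concave assms(3-7) unfolding concave_on_iff by auto
  have "a * (u * x + v * y)\<^sup>2 \<le> a * (u * x\<^sup>2 + v * y\<^sup>2)" using sq assms(1) by (rule mult_left_mono)
  moreover have "b * (u * ln x + v * ln y) \<le> b * ln (u * x + v * y)" using ln assms(2) by (rule mult_left_mono)
  ultimately show ?thesis by (simp add: algebra_simps)
qed

lemma pos_comb: "(x::real) > 0 \<Longrightarrow> y > 0 \<Longrightarrow> u \<ge> 0 \<Longrightarrow> v \<ge> 0 \<Longrightarrow> u + v = 1 \<Longrightarrow> u * x + v * y > 0"
proof (cases "u > 0")
  case True
  assume "x > 0" "y > 0" "v \<ge> 0"
  then show ?thesis using True by (simp add: add_pos_nonneg)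
next
  case False
  assume "x > 0" "y > 0" "u \<ge> 0" "u + v = 1"
  then show ?thesis using False by simp
qed

lemma convex_posorth: "convex (posorth :: (real^'k^'n) set)"
  unfolding convex_def posorth_def by (auto intro: pos_comb)

lemma sep_convex:
  fixes a b :: "'n::finite \<Rightarrow> 'k::finite \<Rightarrow> real"
  assumes "\<And>i s. a i s \<ge> 0" "\<And>i s. b i s \<ge> 0"
  shows "convex_on posorth (sep a b)"
  unfolding convex_on_def
proof (intro conjI convex_posorth ballI allI impI)
  fix x y :: "real^'k^'n" and u v :: real
  assume x: "x \<in> posorth" and y: "y \<in> posorth" and uv: "0 \<le> u" "0 \<le> v" "u + v = 1"
  have "sep a b (u *\<^sub>R x + v *\<^sub>R y) = (\<Sum>i\<in>UNIV. \<Sum>s\<in>UNIV. a i s * (u * x$i$s + v * y$i$s)\<^sup>2 - b i s * ln (u * x$i$s + v * y$i$s))"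
    by (simp add: sep_def)
  also have "\<dots> \<le> (\<Sum>i\<in>UNIV. \<Sum>s\<in>UNIV. u * (a i s * (x$i$s)\<^sup>2 - b i s * ln (x$i$s)) + v * (a i s * (y$i$s)\<^sup>2 - b i s * ln (y$i$s)))"
    by (intro sum_mono phi_convex assms posorthD[OF x] posorthD[OF y] uv)
  also have "\<dots> = u * sep a b x + v * sep a b y"
    by (simp add: sep_def sum.distrib sum_distrib_left)
  finally show "sep a b (u *\<^sub>R x + v *\<^sub>R y) \<le> u * sep a b x + v * sep a b y" .
qed

lemma phi_min:
  fixes a b t :: real
  assumes a: "a > 0" and b: "b > 0" and t: "t > 0"
  defines "t0 \<equiv> sqrt (b / (2*a))"
  shows "a * t0\<^sup>2 - b * ln t0 \<le> a * t\<^sup>2 - b * ln t"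
    and "a * t\<^sup>2 - b * ln t \<le> a * t0\<^sup>2 - b * ln t0 \<Longrightarrow> t = t0"
proof -
  have t0: "t0 > 0" using a b unfolding t0_def by simp
  have t0sq: "t0\<^sup>2 = b / (2*a)" using a b unfolding t0_def by simp
  define r where "r = t\<^sup>2 / t0\<^sup>2"
  have r: "r > 0" using t t0 unfolding r_def by simp
  have lnr: "ln r = 2 * (ln t - ln t0)"
    using t t0 unfolding r_def by (simp add: ln_div ln_realpow)
  have "a * t\<^sup>2 = a * t0\<^sup>2 * r" using t0 unfolding r_def by simp
  also have "a * t0\<^sup>2 = b / 2" using a unfolding t0sq by simp
  finally have at: "a * t\<^sup>2 = b / 2 * r" .
  have key: "(a * t\<^sup>2 - b * ln t) - (a * t0\<^sup>2 - b * ln t0) = b / 2 * (r - 1 - ln r)"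
    unfolding at lnr \<open>a * t0\<^sup>2 = b / 2\<close> by (simp add: algebra_simps)
  have "r - 1 - ln r \<ge> 0" using ln_le_minus_one[OF r] by simp
  then show "a * t0\<^sup>2 - b * ln t0 \<le> a * t\<^sup>2 - b * ln t"
  proof -
    have "b / 2 * (r - 1 - ln r) \<ge> 0" using b \<open>r - 1 - ln r \<ge> 0\<close> by simp
    then show ?thesis using key by linarith
  qed
  assume "a * t\<^sup>2 - b * ln t \<le> a * t0\<^sup>2 - b * ln t0"
  then have "b / 2 * (r - 1 - ln r) \<le> 0" using key by simp
  with b have "r - 1 - ln r \<le> 0" by (simp add: mult_le_0_iff)
  then have "ln r = r - 1" using ln_le_minus_one[OF r] by simp
  then have "r = 1" using ln_eq_minus_one[OF r] by simp
  then have "t\<^sup>2 = t0\<^sup>2" using t0 unfolding r_def by simp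
  then show "t = t0" using t t0 by (simp add: power2_eq_iff_nonneg)
qed

lemma sep_pairs: "sep a b V = (\<Sum>p\<in>UNIV. a (fst p) (snd p) * (V$fst p$snd p)\<^sup>2 - b (fst p) (snd p) * ln (V$fst p$snd p))"
  unfolding sep_def sum.cartesian_product UNIV_Times_UNIV[symmetric] by (simp add: case_prod_beta)

lemma sep_min:
  fixes a b :: "'n::finite \<Rightarrow> 'k::finite \<Rightarrow> real"
  assumes a: "\<And>i s. a i s > 0" and b: "\<And>i s. b i s > 0"
  defines "V0 \<equiv> (\<chi> i s. sqrt (b i s / (2 * a i s))) :: real^'k^'n"
  shows "V0 \<in> posorth" "V \<in> posorth \<Longrightarrow> sep a b V0 \<le> sep a b V"
    "V \<in> posorth \<Longrightarrow> sep a b V \<le> sep a b V0 \<Longrightarrow> V = V0"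
proof -
  show "V0 \<in> posorth" unfolding posorth_def V0_def using a b by (simp add: less_le_not_le[symmetric])
  assume V: "V \<in> posorth"
  have le: "\<And>p. a (fst p) (snd p) * (V0$fst p$snd p)\<^sup>2 - b (fst p) (snd p) * ln (V0$fst p$snd p)
     \<le> a (fst p) (snd p) * (V$fst p$snd p)\<^sup>2 - b (fst p) (snd p) * ln (V$fst p$snd p)"
    unfolding V0_def using phi_min(1)[OF a b posorthD[OF V]] by simp
  show "sep a b V0 \<le> sep a b V" unfolding sep_pairs by (intro sum_mono le)
  assume h: "sep a b V \<le> sep a b V0"
  show "V = V0"
  proof (rule ccontr)
    assume "V \<noteq> V0"
    then obtain i s where ne: "V$i$s \<noteq> V0$i$s" by (metis vec_eq_iff)
    have "a i s * (V0$i$s)\<^sup>2 - b i s * ln (V0$i$s) < a i s * (V$i$s)\<^sup>2 - b i s * ln (V$i$s)"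
      using phi_min(1,2)[OF a b posorthD[OF V], of i s] ne unfolding V0_def by force
    then have "sep a b V0 < sep a b V" unfolding sep_pairs
      by (intro sum_strict_mono_ex1 ballI le) (auto intro!: bexI[of _ "(i,s)"])
    with h show False by simp
  qed
qed



lemma lnsum:
  fixes M :: "'b::finite \<Rightarrow> 'b \<Rightarrow> real" and X Y :: "'a::finite \<Rightarrow> 'b \<Rightarrow> real"
  assumes sym: "\<And>s l. M s l = M l s" and X: "\<And>i s. X i s > 0" and Y: "\<And>i s. Y i s > 0"
  shows "(\<Sum>i\<in>UNIV. \<Sum>s\<in>UNIV. \<Sum>l\<in>UNIV. M s l * Y i s * Y i l * (1 + ln (X i s * X i l / (Y i s * Y i l))))
    = (\<Sum>i\<in>UNIV. \<Sum>s\<in>UNIV. \<Sum>l\<in>UNIV. M s l * Y i s * Y i l)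
      + 2 * (\<Sum>i\<in>UNIV. \<Sum>s\<in>UNIV. Y i s * (\<Sum>l\<in>UNIV. M s l * Y i l) * (ln (X i s) - ln (Y i s)))"
proof -
  define g where "g i s l = M s l * Y i s * Y i l * (ln (X i s) - ln (Y i s))" for i s l
  have pt: "M s l * Y i s * Y i l * (1 + ln (X i s * X i l / (Y i s * Y i l)))
      = M s l * Y i s * Y i l + g i s l + g i l s" for i s l
    using X[of i s] X[of i l] Y[of i s] Y[of i l]
    by (simp add: g_def ln_div ln_mult sym[of s l] algebra_simps)
  have sw: "(\<Sum>s\<in>UNIV. \<Sum>l\<in>UNIV. g i l s) = (\<Sum>s\<in>UNIV. \<Sum>l\<in>UNIV. g i s l)" for i
    by (rule sum.swap)
  have inner: "(\<Sum>l\<in>UNIV. g i s l) = Y i s * (\<Sum>l\<in>UNIV. M s l * Y i l) * (ln (X i s) - ln (Y i s))" for i s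
    by (simp add: g_def sum_distrib_left sum_distrib_right algebra_simps)
  have "(\<Sum>i\<in>UNIV. \<Sum>s\<in>UNIV. \<Sum>l\<in>UNIV. M s l * Y i s * Y i l * (1 + ln (X i s * X i l / (Y i s * Y i l))))
     = (\<Sum>i\<in>UNIV. \<Sum>s\<in>UNIV. \<Sum>l\<in>UNIV. M s l * Y i s * Y i l)
       + (\<Sum>i\<in>UNIV. (\<Sum>s\<in>UNIV. \<Sum>l\<in>UNIV. g i s l) + (\<Sum>s\<in>UNIV. \<Sum>l\<in>UNIV. g i l s))"
    unfolding pt by (simp add: sum.distrib)
  also have "\<dots> = (\<Sum>i\<in>UNIV. \<Sum>s\<in>UNIV. \<Sum>l\<in>UNIV. M s l * Y i s * Y i l)
       + 2 * (\<Sum>i\<in>UNIV. \<Sum>s\<in>UNIV. \<Sum>l\<in>UNIV. g i s l)"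
    unfolding sw by (simp add: sum_distrib_left)
  finally show ?thesis unfolding inner .
qed



lemma Jpart_dec:
  fixes A :: "real^'k^'k" and B Y :: "real^'k^'n"
  assumes symA: "transpose A = A" and Y: "Y \<in> posorth"
  shows "\<exists>K. \<forall>V\<in>posorth. Jpart A B V Y =
    sep (\<lambda>i s. (negpart B $ i $ s + (Y ** pospart A) $ i $ s) / Y$i$s)
        (\<lambda>i s. 2 * Y$i$s * (pospart B $ i $ s + (Y ** negpart A) $ i $ s)) V + K"
proof -
  define C where "C = (\<Sum>i\<in>UNIV. \<Sum>s\<in>UNIV. \<Sum>l\<in>UNIV. negpart A $ s $ l * Y $ i $ s * Y $ i $ l)"
  define k where "k i s = -2 * pospart B $ i $ s * Y$i$s + 2 * pospart B $ i $ s * Y$i$s * ln (Y$i$s)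
      + negpart B $ i $ s * Y$i$s + 2 * Y$i$s * (Y ** negpart A)$i$s * ln (Y$i$s)" for i s
  have nAY: "(\<Sum>l\<in>UNIV. negpart A $ s $ l * Y $ i $ l) = (Y ** negpart A) $ i $ s" for i s
    by (simp add: mm_comp np_sym[OF symA, of s] mult.commute)
  show ?thesis
  proof (intro exI ballI)
    fix V :: "real^'k^'n" assume V: "V \<in> posorth"
    have T4: "(\<Sum>i\<in>UNIV. \<Sum>s\<in>UNIV. \<Sum>l\<in>UNIV. negpart A $ s $ l * Y $ i $ s * Y $ i $ l
              * (1 + ln ((V $ i $ s * V $ i $ l) / (Y $ i $ s * Y $ i $ l))))
        = C + 2 * (\<Sum>i\<in>UNIV. \<Sum>s\<in>UNIV. Y$i$s * (Y ** negpart A)$i$s * (ln (V$i$s) - ln (Y$i$s)))"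
      unfolding C_def nAY[symmetric]
      by (rule lnsum[where M = "\<lambda>s l. negpart A $ s $ l" and X = "\<lambda>i s. V$i$s" and Y = "\<lambda>i s. Y$i$s"])
         (auto simp: np_sym[OF symA] posorthD[OF V] posorthD[OF Y])
    have T1: "ln (V $ i $ s / Y $ i $ s) = ln (V$i$s) - ln (Y$i$s)" for i s
      using posorthD[OF V, of i s] posorthD[OF Y, of i s] by (simp add: ln_div)
    have "Jpart A B V Y = (\<Sum>i\<in>UNIV. \<Sum>s\<in>UNIV.
          -2 * (pospart B $ i $ s * Y $ i $ s * (1 + (ln (V$i$s) - ln (Y$i$s))))
          + negpart B $ i $ s * ((V $ i $ s)\<^sup>2 + (Y $ i $ s)\<^sup>2) / Y $ i $ s
          + (Y ** pospart A) $ i $ s * (V $ i $ s)\<^sup>2 / Y $ i $ s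
          - 2 * (Y$i$s * (Y ** negpart A)$i$s * (ln (V$i$s) - ln (Y$i$s)))) - C"
      unfolding Jpart_def T4 T1 by (simp add: sum.distrib sum_subtractf sum_distrib_left sum_negf)
    also have "\<dots> = (\<Sum>i\<in>UNIV. \<Sum>s\<in>UNIV.
          ((negpart B $ i $ s + (Y ** pospart A) $ i $ s) / Y$i$s * (V$i$s)\<^sup>2
           - 2 * Y$i$s * (pospart B $ i $ s + (Y ** negpart A) $ i $ s) * ln (V$i$s)) + k i s) - C"
    proof -
      have pw: "-2 * (pospart B $ i $ s * Y $ i $ s * (1 + (ln (V$i$s) - ln (Y$i$s))))
          + negpart B $ i $ s * ((V $ i $ s)\<^sup>2 + (Y $ i $ s)\<^sup>2) / Y $ i $ s
          + (Y ** pospart A) $ i $ s * (V $ i $ s)\<^sup>2 / Y $ i $ s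
          - 2 * (Y$i$s * (Y ** negpart A)$i$s * (ln (V$i$s) - ln (Y$i$s)))
          = ((negpart B $ i $ s + (Y ** pospart A) $ i $ s) / Y$i$s * (V$i$s)\<^sup>2
           - 2 * Y$i$s * (pospart B $ i $ s + (Y ** negpart A) $ i $ s) * ln (V$i$s)) + k i s" for i s
        using posorthD[OF Y, of i s] unfolding k_def
        by (simp add: field_simps power2_eq_square)
      show ?thesis by (simp only: pw)
    qed
    also have "\<dots> = sep (\<lambda>i s. (negpart B $ i $ s + (Y ** pospart A) $ i $ s) / Y$i$s)
        (\<lambda>i s. 2 * Y$i$s * (pospart B $ i $ s + (Y ** negpart A) $ i $ s)) V
        + ((\<Sum>i\<in>UNIV. \<Sum>s\<in>UNIV. k i s) - C)"
      unfolding sep_def by (simp add: sum.distrib)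
    finally show "Jpart A B V Y = sep (\<lambda>i s. (negpart B $ i $ s + (Y ** pospart A) $ i $ s) / Y$i$s)
        (\<lambda>i s. 2 * Y$i$s * (pospart B $ i $ s + (Y ** negpart A) $ i $ s)) V
        + ((\<Sum>i\<in>UNIV. \<Sum>s\<in>UNIV. k i s) - C)" .
  qed
qed

lemma swap3: "(\<Sum>j\<in>UNIV. \<Sum>l\<in>UNIV. \<Sum>s\<in>UNIV. f j l s) = (\<Sum>s\<in>UNIV. \<Sum>j\<in>UNIV. \<Sum>l\<in>UNIV. (f j l s :: real))"
proof -
  have "(\<Sum>j\<in>UNIV. \<Sum>l\<in>UNIV. \<Sum>s\<in>UNIV. f j l s) = (\<Sum>j\<in>UNIV. \<Sum>s\<in>UNIV. \<Sum>l\<in>UNIV. f j l s)"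
    by (rule sum.cong[OF refl], rule sum.swap)
  also have "\<dots> = (\<Sum>s\<in>UNIV. \<Sum>j\<in>UNIV. \<Sum>l\<in>UNIV. f j l s)" by (rule sum.swap)
  finally show ?thesis .
qed

lemma Jgraph_dec:
  fixes W :: "real^'n^'n" and Y :: "real^'k^'n"
  assumes symW: "transpose W = W" and Y: "Y \<in> posorth"
  shows "\<exists>K. \<forall>V\<in>posorth. Jgraph W V Y =
    sep (\<lambda>i s. (degmat W ** Y) $ i $ s / Y$i$s) (\<lambda>i s. 2 * Y$i$s * (W ** Y) $ i $ s) V + K"
proof -
  define C where "C = (\<Sum>s\<in>UNIV. \<Sum>j\<in>UNIV. \<Sum>l\<in>UNIV. W $ j $ l * Y $ j $ s * Y $ l $ s)"
  define k where "k i s = 2 * Y$i$s * (W ** Y)$i$s * ln (Y$i$s)" for i s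
  have WY: "(\<Sum>l\<in>UNIV. W $ j $ l * Y $ l $ s) = (W ** Y) $ j $ s" for j s
    by (simp add: mm_comp)
  show ?thesis
  proof (intro exI ballI)
    fix V :: "real^'k^'n" assume V: "V \<in> posorth"
    have T4: "(\<Sum>j\<in>UNIV. \<Sum>l\<in>UNIV. \<Sum>s\<in>UNIV. W $ j $ l * Y $ j $ s * Y $ l $ s
              * (1 + ln ((V $ j $ s * V $ l $ s) / (Y $ j $ s * Y $ l $ s))))
        = C + 2 * (\<Sum>s\<in>UNIV. \<Sum>j\<in>UNIV. Y$j$s * (W ** Y)$j$s * (ln (V$j$s) - ln (Y$j$s)))"
      unfolding C_def WY[symmetric]
      apply (subst swap3)
      by (rule lnsum[where M = "\<lambda>j l. W $ j $ l" and X = "\<lambda>s j. V$j$s" and Y = "\<lambda>s j. Y$j$s"])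
         (auto simp: sym_comp[OF symW] posorthD[OF V] posorthD[OF Y])
    have sw: "(\<Sum>s\<in>UNIV. \<Sum>j\<in>UNIV. Y$j$s * (W ** Y)$j$s * (ln (V$j$s) - ln (Y$j$s)))
       = (\<Sum>j\<in>UNIV. \<Sum>s\<in>UNIV. Y$j$s * (W ** Y)$j$s * (ln (V$j$s) - ln (Y$j$s)))"
      by (rule sum.swap)
    have "Jgraph W V Y = (\<Sum>i\<in>UNIV. \<Sum>s\<in>UNIV.
          (degmat W ** Y) $ i $ s * (V $ i $ s)\<^sup>2 / Y $ i $ s
          - 2 * (Y$i$s * (W ** Y)$i$s * (ln (V$i$s) - ln (Y$i$s)))) - C"
      unfolding Jgraph_def T4 sw by (simp add: sum.distrib sum_subtractf sum_distrib_left sum_negf)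
    also have "\<dots> = (\<Sum>i\<in>UNIV. \<Sum>s\<in>UNIV.
          ((degmat W ** Y) $ i $ s / Y$i$s * (V$i$s)\<^sup>2 - 2 * Y$i$s * (W ** Y) $ i $ s * ln (V$i$s)) + k i s) - C"
      unfolding k_def by (simp add: algebra_simps)
    also have "\<dots> = sep (\<lambda>i s. (degmat W ** Y) $ i $ s / Y$i$s) (\<lambda>i s. 2 * Y$i$s * (W ** Y) $ i $ s) V
        + ((\<Sum>i\<in>UNIV. \<Sum>s\<in>UNIV. k i s) - C)"
      unfolding sep_def by (simp add: sum.distrib)
    finally show "Jgraph W V Y = sep (\<lambda>i s. (degmat W ** Y) $ i $ s / Y$i$s) (\<lambda>i s. 2 * Y$i$s * (W ** Y) $ i $ s) V
        + ((\<Sum>i\<in>UNIV. \<Sum>s\<in>UNIV. k i s) - C)" .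
  qed
qed



lemma tr1: "trace (transpose V ** M) = (\<Sum>i\<in>UNIV. \<Sum>s\<in>UNIV. V$i$s * (M :: real^'k^'n)$i$s)"
  unfolding trace_def mm_comp by (simp add: transpose_def, rule sum.swap)

lemma tr2: "trace (V ** A ** transpose V) = (\<Sum>i\<in>UNIV. \<Sum>s\<in>UNIV. \<Sum>l\<in>UNIV. V$i$s * (A :: real^'k^'k)$s$l * (V :: real^'k^'n)$i$l)"
proof -
  have "trace (V ** A ** transpose V) = (\<Sum>i\<in>UNIV. \<Sum>l\<in>UNIV. \<Sum>s\<in>UNIV. V$i$s * A$s$l * V$i$l)"
    unfolding trace_def mm_comp by (simp add: transpose_def sum_distrib_right)
  also have "\<dots> = (\<Sum>i\<in>UNIV. \<Sum>s\<in>UNIV. \<Sum>l\<in>UNIV. V$i$s * A$s$l * V$i$l)"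
    by (rule sum.cong[OF refl], rule sum.swap)
  finally show ?thesis .
qed

lemma tr3: "trace (transpose V ** W ** V) = (\<Sum>j\<in>UNIV. \<Sum>l\<in>UNIV. \<Sum>s\<in>UNIV. (V :: real^'k^'n)$j$s * (W :: real^'n^'n)$j$l * V$l$s)"
proof -
  have "trace (transpose V ** W ** V) = (\<Sum>s\<in>UNIV. \<Sum>l\<in>UNIV. \<Sum>j\<in>UNIV. V$j$s * W$j$l * V$l$s)"
    unfolding trace_def mm_comp by (simp add: transpose_def sum_distrib_right)
  also have "\<dots> = (\<Sum>s\<in>UNIV. \<Sum>j\<in>UNIV. \<Sum>l\<in>UNIV. V$j$s * W$j$l * V$l$s)"
    by (rule sum.cong[OF refl], rule sum.swap)
  also have "\<dots> = (\<Sum>j\<in>UNIV. \<Sum>l\<in>UNIV. \<Sum>s\<in>UNIV. V$j$s * W$j$l * V$l$s)"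
    by (rule swap3[symmetric])
  finally show ?thesis .
qed

lemma degY: "(degmat W ** Y) $ i $ s = (\<Sum>l\<in>UNIV. W $ i $ l) * Y $ i $ s"
proof -
  have "(degmat W ** Y) $ i $ s = (\<Sum>k\<in>UNIV. if i = k then (\<Sum>l\<in>UNIV. W $ i $ l) * Y $ i $ s else 0)"
    unfolding mm_comp degmat_def by (rule sum.cong) auto
  then show ?thesis by simp
qed

lemma tr4: "trace (transpose V ** degmat W ** V) = (\<Sum>i\<in>UNIV. \<Sum>s\<in>UNIV. (\<Sum>l\<in>UNIV. W $ i $ l) * (V $ i $ s)\<^sup>2)"
  unfolding matrix_mul_assoc[symmetric] tr1 degY by (simp add: power2_eq_square algebra_simps)

lemma ln_bound: "(x::real) > 0 \<Longrightarrow> y > 0 \<Longrightarrow> y * (1 + ln (x / y)) \<le> x"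
proof -
  assume x: "x > 0" and y: "y > 0"
  have "ln (x / y) \<le> x / y - 1" using x y by (intro ln_le_minus_one) simp
  then have "y * (1 + ln (x / y)) \<le> y * (x / y)" using y by (intro mult_left_mono) auto
  then show ?thesis using y by simp
qed

lemma cs_row:
  fixes M :: "'b::finite \<Rightarrow> 'b \<Rightarrow> real" and X Y :: "'b \<Rightarrow> real"
  assumes sym: "\<And>s l. M s l = M l s" and M: "\<And>s l. M s l \<ge> 0" and Y: "\<And>s. Y s > 0"
  shows "(\<Sum>s\<in>UNIV. \<Sum>l\<in>UNIV. X s * M s l * X l) \<le> (\<Sum>s\<in>UNIV. (\<Sum>l\<in>UNIV. M s l * Y l) * (X s)\<^sup>2 / Y s)"
proof -
  define g where "g s l = M s l * (X s)\<^sup>2 * Y l / Y s" for s l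
  have pt: "X s * M s l * X l \<le> g s l / 2 + g l s / 2" for s l
  proof -
    have ys: "Y s > 0" and yl: "Y l > 0" using Y by auto
    have "2 * X s * X l \<le> (X s)\<^sup>2 * Y l / Y s + (X l)\<^sup>2 * Y s / Y l"
    proof -
      have "0 \<le> (X s * Y l - X l * Y s)\<^sup>2" by simp
      then have "2 * X s * X l * (Y s * Y l) \<le> (X s)\<^sup>2 * Y l * Y l + (X l)\<^sup>2 * Y s * Y s"
        by (simp add: power2_eq_square algebra_simps)
      then show ?thesis using ys yl by (simp add: field_simps power2_eq_square)
    qed
    then have "M s l * (2 * X s * X l) \<le> M s l * ((X s)\<^sup>2 * Y l / Y s + (X l)\<^sup>2 * Y s / Y l)"
      using M by (intro mult_left_mono) auto
    moreover have "X s * M s l * X l = M s l * (2 * X s * X l) / 2" by simp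
    moreover have "g s l / 2 + g l s / 2 = M s l * ((X s)\<^sup>2 * Y l / Y s + (X l)\<^sup>2 * Y s / Y l) / 2"
      unfolding g_def using sym[of l s] by (simp add: distrib_left add_divide_distrib)
    ultimately show ?thesis by (metis divide_right_mono zero_le_numeral)
  qed
  have "(\<Sum>s\<in>UNIV. \<Sum>l\<in>UNIV. X s * M s l * X l) \<le> (\<Sum>s\<in>UNIV. \<Sum>l\<in>UNIV. g s l / 2 + g l s / 2)"
    by (intro sum_mono pt)
  also have "\<dots> = (\<Sum>s\<in>UNIV. \<Sum>l\<in>UNIV. g s l) / 2 + (\<Sum>s\<in>UNIV. \<Sum>l\<in>UNIV. g l s) / 2"
    by (simp add: sum.distrib sum_divide_distrib)
  also have "(\<Sum>s\<in>UNIV. \<Sum>l\<in>UNIV. g l s) = (\<Sum>s\<in>UNIV. \<Sum>l\<in>UNIV. g s l)" by (rule sum.swap)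
  also have "(\<Sum>s\<in>UNIV. \<Sum>l\<in>UNIV. g s l) = (\<Sum>s\<in>UNIV. (\<Sum>l\<in>UNIV. M s l * Y l) * (X s)\<^sup>2 / Y s)"
  proof (rule sum.cong[OF refl])
    fix s
    have "(\<Sum>l\<in>UNIV. g s l) = (\<Sum>l\<in>UNIV. (X s)\<^sup>2 / Y s * (M s l * Y l))"
      unfolding g_def by (rule sum.cong[OF refl]) simp
    also have "\<dots> = (X s)\<^sup>2 / Y s * (\<Sum>l\<in>UNIV. M s l * Y l)" by (rule sum_distrib_left[symmetric])
    finally show "(\<Sum>l\<in>UNIV. g s l) = (\<Sum>l\<in>UNIV. M s l * Y l) * (X s)\<^sup>2 / Y s" by simp
  qed
  finally show ?thesis by simp
qed



abbreviation Fp :: "real^'k^'k \<Rightarrow> real^'k^'n \<Rightarrow> real^'k^'n \<Rightarrow> real" where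
  "Fp A B V \<equiv> - 2 * trace (transpose V ** pospart B) + 2 * trace (transpose V ** negpart B)
     + trace (V ** pospart A ** transpose V) - trace (V ** negpart A ** transpose V)"

lemma Jpart_ge:
  fixes A :: "real^'k^'k" and B V Y :: "real^'k^'n"
  assumes symA: "transpose A = A" and V: "V \<in> posorth" and Y: "Y \<in> posorth"
  shows "Fp A B V \<le> Jpart A B V Y"
proof -
  have v: "\<And>i s. V$i$s > 0" and y: "\<And>i s. Y$i$s > 0" using posorthD V Y by auto
  have S1: "(\<Sum>i\<in>UNIV. \<Sum>s\<in>UNIV. pospart B $ i $ s * Y $ i $ s * (1 + ln (V $ i $ s / Y $ i $ s)))
      \<le> trace (transpose V ** pospart B)"
    unfolding tr1
  proof (intro sum_mono)
    fix i s
    have "pospart B $ i $ s * (Y $ i $ s * (1 + ln (V $ i $ s / Y $ i $ s))) \<le> pospart B $ i $ s * V $ i $ s"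
      by (intro mult_left_mono ln_bound v y pp_nn)
    then show "pospart B $ i $ s * Y $ i $ s * (1 + ln (V $ i $ s / Y $ i $ s)) \<le> V $ i $ s * pospart B $ i $ s"
      by (simp add: algebra_simps)
  qed
  have S2: "2 * trace (transpose V ** negpart B) \<le>
      (\<Sum>i\<in>UNIV. \<Sum>s\<in>UNIV. negpart B $ i $ s * ((V $ i $ s)\<^sup>2 + (Y $ i $ s)\<^sup>2) / Y $ i $ s)"
    unfolding tr1 sum_distrib_left
  proof (intro sum_mono)
    fix i s
    have "2 * V $ i $ s \<le> ((V $ i $ s)\<^sup>2 + (Y $ i $ s)\<^sup>2) / Y $ i $ s"
    proof -
      have "2 * V $ i $ s * Y $ i $ s \<le> (V $ i $ s)\<^sup>2 + (Y $ i $ s)\<^sup>2"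
        using sum_squares_bound[of "V$i$s" "Y$i$s"] by (simp add: power2_eq_square algebra_simps)
      then show ?thesis using y[of i s] by (simp add: field_simps)
    qed
    then have "negpart B $ i $ s * (2 * V $ i $ s) \<le> negpart B $ i $ s * (((V $ i $ s)\<^sup>2 + (Y $ i $ s)\<^sup>2) / Y $ i $ s)"
      by (intro mult_left_mono np_nn)
    then show "2 * (V $ i $ s * negpart B $ i $ s) \<le> negpart B $ i $ s * ((V $ i $ s)\<^sup>2 + (Y $ i $ s)\<^sup>2) / Y $ i $ s"
      by (simp add: algebra_simps)
  qed
  have S3: "trace (V ** pospart A ** transpose V) \<le>
      (\<Sum>i\<in>UNIV. \<Sum>s\<in>UNIV. (Y ** pospart A) $ i $ s * (V $ i $ s)\<^sup>2 / Y $ i $ s)"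
    unfolding tr2
  proof (rule sum_mono)
    fix i
    have "(\<Sum>s\<in>UNIV. \<Sum>l\<in>UNIV. V $ i $ s * pospart A $ s $ l * V $ i $ l)
        \<le> (\<Sum>s\<in>UNIV. (\<Sum>l\<in>UNIV. pospart A $ s $ l * Y $ i $ l) * (V $ i $ s)\<^sup>2 / Y $ i $ s)"
      by (rule cs_row[where M = "\<lambda>s l. pospart A $ s $ l" and X = "\<lambda>s. V $ i $ s" and Y = "\<lambda>s. Y $ i $ s"])
         (auto simp: pp_sym[OF symA] pp_nn y)
    also have "\<dots> = (\<Sum>s\<in>UNIV. (Y ** pospart A) $ i $ s * (V $ i $ s)\<^sup>2 / Y $ i $ s)"
      by (simp add: mm_comp pp_sym[OF symA] mult.commute)
    finally show "(\<Sum>s\<in>UNIV. \<Sum>l\<in>UNIV. V $ i $ s * pospart A $ s $ l * V $ i $ l)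
        \<le> (\<Sum>s\<in>UNIV. (Y ** pospart A) $ i $ s * (V $ i $ s)\<^sup>2 / Y $ i $ s)" .
  qed
  have S4: "(\<Sum>i\<in>UNIV. \<Sum>s\<in>UNIV. \<Sum>l\<in>UNIV. negpart A $ s $ l * Y $ i $ s * Y $ i $ l
              * (1 + ln ((V $ i $ s * V $ i $ l) / (Y $ i $ s * Y $ i $ l))))
      \<le> trace (V ** negpart A ** transpose V)"
    unfolding tr2
  proof (intro sum_mono)
    fix i s l
    have "negpart A $ s $ l * ((Y $ i $ s * Y $ i $ l) * (1 + ln ((V $ i $ s * V $ i $ l) / (Y $ i $ s * Y $ i $ l))))
       \<le> negpart A $ s $ l * (V $ i $ s * V $ i $ l)"
      by (intro mult_left_mono ln_bound np_nn mult_pos_pos v y)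
    then show "negpart A $ s $ l * Y $ i $ s * Y $ i $ l * (1 + ln ((V $ i $ s * V $ i $ l) / (Y $ i $ s * Y $ i $ l)))
       \<le> V $ i $ s * negpart A $ s $ l * V $ i $ l"
      by (simp add: algebra_simps)
  qed
  show ?thesis unfolding Jpart_def using S1 S2 S3 S4 by linarith
qed

lemma Jpart_eq:
  fixes A :: "real^'k^'k" and B V :: "real^'k^'n"
  assumes symA: "transpose A = A" and V: "V \<in> posorth"
  shows "Jpart A B V V = Fp A B V"
proof -
  have v: "\<And>i s. V$i$s > 0" using posorthD V by auto
  have S1: "(\<Sum>i\<in>UNIV. \<Sum>s\<in>UNIV. pospart B $ i $ s * V $ i $ s * (1 + ln (V $ i $ s / V $ i $ s)))
      = trace (transpose V ** pospart B)"
    unfolding tr1 using v by (intro sum.cong refl) (simp add: less_imp_neq[symmetric] mult.commute)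
  have S2: "(\<Sum>i\<in>UNIV. \<Sum>s\<in>UNIV. negpart B $ i $ s * ((V $ i $ s)\<^sup>2 + (V $ i $ s)\<^sup>2) / V $ i $ s)
      = 2 * trace (transpose V ** negpart B)"
    unfolding tr1 sum_distrib_left using v by (intro sum.cong refl) (simp add: less_imp_neq[symmetric] power2_eq_square field_simps)
  have S3: "(\<Sum>i\<in>UNIV. \<Sum>s\<in>UNIV. (V ** pospart A) $ i $ s * (V $ i $ s)\<^sup>2 / V $ i $ s)
      = trace (V ** pospart A ** transpose V)"
    unfolding tr2
  proof (intro sum.cong refl)
    fix i s
    have "(V ** pospart A) $ i $ s * (V $ i $ s)\<^sup>2 / V $ i $ s = V $ i $ s * (\<Sum>l\<in>UNIV. pospart A $ s $ l * V $ i $ l)"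
      using v[of i s] by (simp add: mm_comp pp_sym[OF symA, of _ s] power2_eq_square mult.commute)
    also have "\<dots> = (\<Sum>l\<in>UNIV. V $ i $ s * pospart A $ s $ l * V $ i $ l)"
      by (simp add: sum_distrib_left mult.assoc)
    finally show "(V ** pospart A) $ i $ s * (V $ i $ s)\<^sup>2 / V $ i $ s = (\<Sum>l\<in>UNIV. V $ i $ s * pospart A $ s $ l * V $ i $ l)" .
  qed
  have S4: "(\<Sum>i\<in>UNIV. \<Sum>s\<in>UNIV. \<Sum>l\<in>UNIV. negpart A $ s $ l * V $ i $ s * V $ i $ l
              * (1 + ln ((V $ i $ s * V $ i $ l) / (V $ i $ s * V $ i $ l))))
      = trace (V ** negpart A ** transpose V)"
    unfolding tr2 using v by (intro sum.cong refl) (simp add: less_imp_neq[symmetric] mult.commute mult.left_commute)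
  show ?thesis unfolding Jpart_def S1 S2 S3 S4 by simp
qed

lemma Jgraph_ge:
  fixes W :: "real^'n^'n" and V Y :: "real^'k^'n"
  assumes Wnn: "\<And>i j. W $ i $ j \<ge> 0" and V: "V \<in> posorth" and Y: "Y \<in> posorth"
  shows "trace (transpose V ** degmat W ** V) - trace (transpose V ** W ** V) \<le> Jgraph W V Y"
proof -
  have v: "\<And>i s. V$i$s > 0" and y: "\<And>i s. Y$i$s > 0" using posorthD V Y by auto
  have G1: "(\<Sum>i\<in>UNIV. \<Sum>s\<in>UNIV. (degmat W ** Y) $ i $ s * (V $ i $ s)\<^sup>2 / Y $ i $ s)
     = trace (transpose V ** degmat W ** V)"
    unfolding tr4 degY using y by (intro sum.cong refl) (simp add: less_imp_neq[symmetric])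
  have G2: "(\<Sum>j\<in>UNIV. \<Sum>l\<in>UNIV. \<Sum>s\<in>UNIV. W $ j $ l * Y $ j $ s * Y $ l $ s
              * (1 + ln ((V $ j $ s * V $ l $ s) / (Y $ j $ s * Y $ l $ s))))
      \<le> trace (transpose V ** W ** V)"
    unfolding tr3
  proof (intro sum_mono)
    fix j l s
    have "W $ j $ l * ((Y $ j $ s * Y $ l $ s) * (1 + ln ((V $ j $ s * V $ l $ s) / (Y $ j $ s * Y $ l $ s))))
       \<le> W $ j $ l * (V $ j $ s * V $ l $ s)"
      by (intro mult_left_mono ln_bound Wnn mult_pos_pos v y)
    then show "W $ j $ l * Y $ j $ s * Y $ l $ s * (1 + ln ((V $ j $ s * V $ l $ s) / (Y $ j $ s * Y $ l $ s)))
       \<le> V $ j $ s * W $ j $ l * V $ l $ s"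
      by (simp add: algebra_simps)
  qed
  show ?thesis unfolding Jgraph_def using G1 G2 by linarith
qed

lemma Jgraph_eq:
  fixes W :: "real^'n^'n" and V :: "real^'k^'n"
  assumes V: "V \<in> posorth"
  shows "Jgraph W V V = trace (transpose V ** degmat W ** V) - trace (transpose V ** W ** V)"
proof -
  have v: "\<And>i s. V$i$s > 0" using posorthD V by auto
  have G1: "(\<Sum>i\<in>UNIV. \<Sum>s\<in>UNIV. (degmat W ** V) $ i $ s * (V $ i $ s)\<^sup>2 / V $ i $ s)
     = trace (transpose V ** degmat W ** V)"
    unfolding tr4 degY using v by (intro sum.cong refl) (simp add: less_imp_neq[symmetric])
  have G2: "(\<Sum>j\<in>UNIV. \<Sum>l\<in>UNIV. \<Sum>s\<in>UNIV. W $ j $ l * V $ j $ s * V $ l $ s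
              * (1 + ln ((V $ j $ s * V $ l $ s) / (V $ j $ s * V $ l $ s))))
      = trace (transpose V ** W ** V)"
    unfolding tr3 using v by (intro sum.cong refl) (simp add: less_imp_neq[symmetric] mult.commute mult.left_commute)
  show ?thesis unfolding Jgraph_def G1 G2 ..
qed



lemma mm_addl: "((X + Z) ** Y) $ i $ s = (X ** Y) $ i $ s + (Z ** Y) $ i $ s"
  by (simp add: mm_comp distrib_right sum.distrib)
lemma mm_addr: "(Y ** (X + Z)) $ i $ s = (Y ** X) $ i $ s + (Y ** Z) $ i $ s"
  by (simp add: mm_comp distrib_left sum.distrib)

lemma mm_nn: "(\<And>i j. X $ i $ j \<ge> 0) \<Longrightarrow> (\<And>i j. Z $ i $ j \<ge> (0::real)) \<Longrightarrow> (X ** Z) $ i $ s \<ge> 0"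
  by (simp add: mm_comp sum_nonneg)

lemma degmat_nn: "(\<And>i j. W $ i $ j \<ge> 0) \<Longrightarrow> degmat W $ i $ j \<ge> (0::real)"
  by (simp add: degmat_def sum_nonneg)

lemma reg: "(s1::real) + k1 + (s2 + k2) + l * (s3 + k3 + (s4 + k4)) = s1 + s2 + l * (s3 + s4) + (k1 + k2 + l * (k3 + k4))"
  by (simp add: algebra_simps)

theorem mainTheorem2:
  fixes lam2 :: real
    and A1 A2 :: "real^'k^'k"
    and B1 B2 :: "real^'k^'n"
    and WP WQ :: "real^'n^'n"
    and V' :: "real^'k^'n"
  assumes "lam2 \<ge> 0"
    and "transpose A1 = A1" and "transpose A2 = A2"
    and "transpose WP = WP" and "transpose WQ = WQ"
    and "\<forall>i j. WP $ i $ j \<ge> 0" and "\<forall>i j. WQ $ i $ j \<ge> 0"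
    and "V' \<in> posorth"
  shows
    "(\<forall>V\<in>posorth. Jaux lam2 A1 A2 B1 B2 WP WQ V V' \<ge> Fobj lam2 A1 A2 B1 B2 WP WQ V)
     \<and> (\<forall>V\<in>posorth. Jaux lam2 A1 A2 B1 B2 WP WQ V V = Fobj lam2 A1 A2 B1 B2 WP WQ V)
     \<and> convex_on posorth (\<lambda>V. Jaux lam2 A1 A2 B1 B2 WP WQ V V')
     \<and> (let \<Delta>1 = pospart B1 + pospart B2 + V' ** (negpart A1 + negpart A2)
                 + lam2 *\<^sub>R ((WP + WQ) ** V');
            \<Delta>2 = negpart B1 + negpart B2 + V' ** (pospart A1 + pospart A2)
                 + lam2 *\<^sub>R ((degmat WP + degmat WQ) ** V');
            Vs = (\<chi> i j. V' $ i $ j * sqrt (\<Delta>1 $ i $ j / \<Delta>2 $ i $ j))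
        in (\<Delta>1 \<in> posorth \<and> \<Delta>2 \<in> posorth) \<longrightarrow>
           (Vs \<in> posorth
            \<and> (\<forall>V\<in>posorth. Jaux lam2 A1 A2 B1 B2 WP WQ Vs V' \<le> Jaux lam2 A1 A2 B1 B2 WP WQ V V')
            \<and> (\<forall>V\<in>posorth. Jaux lam2 A1 A2 B1 B2 WP WQ V V' \<le> Jaux lam2 A1 A2 B1 B2 WP WQ Vs V'
                             \<longrightarrow> V = Vs)))"
proof -
  note lam = assms(1) and sA1 = assms(2) and sA2 = assms(3) and sWP = assms(4) and sWQ = assms(5)
  have nWP: "\<And>i j. WP $ i $ j \<ge> 0" and nWQ: "\<And>i j. WQ $ i $ j \<ge> 0" using assms(6,7) by auto
  define Y where "Y = V'"
  have Y: "Y \<in> posorth" using assms(8) Y_def by simp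
  have y: "\<And>i s. Y $ i $ s > 0" using posorthD[OF Y] .
  define J where "J V = Jaux lam2 A1 A2 B1 B2 WP WQ V Y" for V
  have FJ: "Fobj lam2 A1 A2 B1 B2 WP WQ V = Fp A1 B1 V + Fp A2 B2 V
      + lam2 * ((trace (transpose V ** degmat WP ** V) - trace (transpose V ** WP ** V))
              + (trace (transpose V ** degmat WQ ** V) - trace (transpose V ** WQ ** V)))" for V
    unfolding Fobj_def by (simp add: algebra_simps)
  have P1: "\<forall>V\<in>posorth. Jaux lam2 A1 A2 B1 B2 WP WQ V V' \<ge> Fobj lam2 A1 A2 B1 B2 WP WQ V"
  proof
    fix V :: "real^'k^'n" assume V: "V \<in> posorth"
    have "lam2 * ((trace (transpose V ** degmat WP ** V) - trace (transpose V ** WP ** V))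
              + (trace (transpose V ** degmat WQ ** V) - trace (transpose V ** WQ ** V)))
        \<le> lam2 * (Jgraph WP V V' + Jgraph WQ V V')"
      by (intro mult_left_mono add_mono Jgraph_ge nWP nWQ V assms(8) lam)
    then show "Jaux lam2 A1 A2 B1 B2 WP WQ V V' \<ge> Fobj lam2 A1 A2 B1 B2 WP WQ V"
      unfolding FJ Jaux_def using Jpart_ge[OF sA1 V assms(8), of B1] Jpart_ge[OF sA2 V assms(8), of B2]
      by linarith
  qed
  have P2: "\<forall>V\<in>posorth. Jaux lam2 A1 A2 B1 B2 WP WQ V V = Fobj lam2 A1 A2 B1 B2 WP WQ V"
    unfolding FJ Jaux_def by (simp add: Jpart_eq sA1 sA2 Jgraph_eq)
  define \<Delta>1 where "\<Delta>1 = pospart B1 + pospart B2 + V' ** (negpart A1 + negpart A2)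
                 + lam2 *\<^sub>R ((WP + WQ) ** V')"
  define \<Delta>2 where "\<Delta>2 = negpart B1 + negpart B2 + V' ** (pospart A1 + pospart A2)
                 + lam2 *\<^sub>R ((degmat WP + degmat WQ) ** V')"
  have D1c: "\<Delta>1 $ i $ s = pospart B1 $ i $ s + pospart B2 $ i $ s + (Y ** negpart A1) $ i $ s
       + (Y ** negpart A2) $ i $ s + lam2 * ((WP ** Y) $ i $ s + (WQ ** Y) $ i $ s)" for i s
    unfolding \<Delta>1_def Y_def by (simp add: mm_addl mm_addr)
  have D2c: "\<Delta>2 $ i $ s = negpart B1 $ i $ s + negpart B2 $ i $ s + (Y ** pospart A1) $ i $ s
       + (Y ** pospart A2) $ i $ s + lam2 * ((degmat WP ** Y) $ i $ s + (degmat WQ ** Y) $ i $ s)" for i s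
    unfolding \<Delta>2_def Y_def by (simp add: mm_addl mm_addr)
  define a where "a i s = \<Delta>2 $ i $ s / Y $ i $ s" for i s
  define b where "b i s = 2 * Y $ i $ s * \<Delta>1 $ i $ s" for i s
  obtain K1 where K1: "\<forall>V\<in>posorth. Jpart A1 B1 V Y =
    sep (\<lambda>i s. (negpart B1 $ i $ s + (Y ** pospart A1) $ i $ s) / Y$i$s)
        (\<lambda>i s. 2 * Y$i$s * (pospart B1 $ i $ s + (Y ** negpart A1) $ i $ s)) V + K1"
    using Jpart_dec[OF sA1 Y] by blast
  obtain K2 where K2: "\<forall>V\<in>posorth. Jpart A2 B2 V Y =
    sep (\<lambda>i s. (negpart B2 $ i $ s + (Y ** pospart A2) $ i $ s) / Y$i$s)
        (\<lambda>i s. 2 * Y$i$s * (pospart B2 $ i $ s + (Y ** negpart A2) $ i $ s)) V + K2"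
    using Jpart_dec[OF sA2 Y] by blast
  obtain K3 where K3: "\<forall>V\<in>posorth. Jgraph WP V Y =
    sep (\<lambda>i s. (degmat WP ** Y) $ i $ s / Y$i$s) (\<lambda>i s. 2 * Y$i$s * (WP ** Y) $ i $ s) V + K3"
    using Jgraph_dec[OF sWP Y] by blast
  obtain K4 where K4: "\<forall>V\<in>posorth. Jgraph WQ V Y =
    sep (\<lambda>i s. (degmat WQ ** Y) $ i $ s / Y$i$s) (\<lambda>i s. 2 * Y$i$s * (WQ ** Y) $ i $ s) V + K4"
    using Jgraph_dec[OF sWQ Y] by blast
  define K where "K = K1 + K2 + lam2 * (K3 + K4)"
  have Jsep: "J V = sep a b V + K" if V: "V \<in> posorth" for V
  proof -
    have "J V = sep (\<lambda>i s. (negpart B1 $ i $ s + (Y ** pospart A1) $ i $ s) / Y$i$s)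
        (\<lambda>i s. 2 * Y$i$s * (pospart B1 $ i $ s + (Y ** negpart A1) $ i $ s)) V
      + sep (\<lambda>i s. (negpart B2 $ i $ s + (Y ** pospart A2) $ i $ s) / Y$i$s)
        (\<lambda>i s. 2 * Y$i$s * (pospart B2 $ i $ s + (Y ** negpart A2) $ i $ s)) V
      + lam2 * (sep (\<lambda>i s. (degmat WP ** Y) $ i $ s / Y$i$s) (\<lambda>i s. 2 * Y$i$s * (WP ** Y) $ i $ s) V
       + sep (\<lambda>i s. (degmat WQ ** Y) $ i $ s / Y$i$s) (\<lambda>i s. 2 * Y$i$s * (WQ ** Y) $ i $ s) V) + K"
      unfolding J_def Jaux_def K_def K1[rule_format, OF V] K2[rule_format, OF V] K3[rule_format, OF V] K4[rule_format, OF V]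
      by (rule reg)
    also have "\<dots> = sep a b V + K"
    proof -
      have "sep (\<lambda>i s. (negpart B1 $ i $ s + (Y ** pospart A1) $ i $ s) / Y$i$s)
        (\<lambda>i s. 2 * Y$i$s * (pospart B1 $ i $ s + (Y ** negpart A1) $ i $ s)) V
      + sep (\<lambda>i s. (negpart B2 $ i $ s + (Y ** pospart A2) $ i $ s) / Y$i$s)
        (\<lambda>i s. 2 * Y$i$s * (pospart B2 $ i $ s + (Y ** negpart A2) $ i $ s)) V
      + lam2 * (sep (\<lambda>i s. (degmat WP ** Y) $ i $ s / Y$i$s) (\<lambda>i s. 2 * Y$i$s * (WP ** Y) $ i $ s) V
       + sep (\<lambda>i s. (degmat WQ ** Y) $ i $ s / Y$i$s) (\<lambda>i s. 2 * Y$i$s * (WQ ** Y) $ i $ s) V) = sep a b V"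
        unfolding sep_add sep_scale
      proof (rule sep_cong)
        fix i s
        show "(negpart B1 $ i $ s + (Y ** pospart A1) $ i $ s) / Y $ i $ s +
          (negpart B2 $ i $ s + (Y ** pospart A2) $ i $ s) / Y $ i $ s +
          lam2 * ((degmat WP ** Y) $ i $ s / Y $ i $ s + (degmat WQ ** Y) $ i $ s / Y $ i $ s) = a i s"
          unfolding a_def D2c using y[of i s] by (simp add: field_simps)
        show "2 * Y $ i $ s * (pospart B1 $ i $ s + (Y ** negpart A1) $ i $ s) +
          2 * Y $ i $ s * (pospart B2 $ i $ s + (Y ** negpart A2) $ i $ s) +
          lam2 * (2 * Y $ i $ s * (WP ** Y) $ i $ s + 2 * Y $ i $ s * (WQ ** Y) $ i $ s) = b i s"
          unfolding b_def D1c by (simp add: algebra_simps)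
      qed
      then show ?thesis by simp
    qed
    finally show ?thesis .
  qed
  have ynn: "\<And>i j. Y $ i $ j \<ge> 0" using y less_imp_le by blast
  have D1nn: "\<Delta>1 $ i $ s \<ge> 0" for i s
    unfolding D1c using lam
    by (intro add_nonneg_nonneg mult_nonneg_nonneg pp_nn mm_nn ynn np_nn nWP nWQ)
  have D2nn: "\<Delta>2 $ i $ s \<ge> 0" for i s
    unfolding D2c using lam
    by (intro add_nonneg_nonneg mult_nonneg_nonneg pp_nn mm_nn ynn np_nn degmat_nn nWP nWQ)
  have anm: "\<And>i s. a i s \<ge> 0" unfolding a_def using D2nn y by (simp add: less_imp_le)
  have bnm: "\<And>i s. b i s \<ge> 0" unfolding b_def using D1nn y by (simp add: less_imp_le)
  have cvx: "convex_on posorth J"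
    unfolding convex_on_def
  proof (intro conjI convex_posorth ballI allI impI)
    fix x z :: "real^'k^'n" and u v :: real
    assume x: "x \<in> posorth" and z: "z \<in> posorth" and uv: "0 \<le> u" "0 \<le> v" "u + v = 1"
    have m: "u *\<^sub>R x + v *\<^sub>R z \<in> posorth"
      using convex_posorth x z uv unfolding convex_def by blast
    have "sep a b (u *\<^sub>R x + v *\<^sub>R z) \<le> u * sep a b x + v * sep a b z"
    proof -
      have "convex_on posorth (sep a b)" by (intro sep_convex anm bnm)
      then show ?thesis using x z uv unfolding convex_on_def by blast
    qed
    moreover have "u * K + v * K = K" using uv(3) by (simp add: distrib_right[symmetric])
    moreover have "u * (sep a b x + K) + v * (sep a b z + K) = u * sep a b x + v * sep a b z + (u * K + v * K)"
      by (simp add: distrib_left)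
    ultimately show "J (u *\<^sub>R x + v *\<^sub>R z) \<le> u * J x + v * J z"
      unfolding Jsep[OF m] Jsep[OF x] Jsep[OF z] by linarith
  qed
  define Vs :: "real^'k^'n" where "Vs = (\<chi> i j. V' $ i $ j * sqrt (\<Delta>1 $ i $ j / \<Delta>2 $ i $ j))"
  have P4: "(\<Delta>1 \<in> posorth \<and> \<Delta>2 \<in> posorth) \<longrightarrow>
           (Vs \<in> posorth
            \<and> (\<forall>V\<in>posorth. J Vs \<le> J V)
            \<and> (\<forall>V\<in>posorth. J V \<le> J Vs \<longrightarrow> V = Vs))"
  proof
    assume "\<Delta>1 \<in> posorth \<and> \<Delta>2 \<in> posorth"
    then have d1: "\<And>i s. \<Delta>1 $ i $ s > 0" and d2: "\<And>i s. \<Delta>2 $ i $ s > 0" using posorthD by auto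
    have apos: "\<And>i s. a i s > 0" unfolding a_def using d2 y by simp
    have bpos: "\<And>i s. b i s > 0" unfolding b_def using d1 y by simp
    have VsEq: "Vs = (\<chi> i s. sqrt (b i s / (2 * a i s)))"
    proof -
      have "V' $ i $ s * sqrt (\<Delta>1 $ i $ s / \<Delta>2 $ i $ s) = sqrt (b i s / (2 * a i s))" for i s
      proof -
        have "b i s / (2 * a i s) = (Y $ i $ s)\<^sup>2 * (\<Delta>1 $ i $ s / \<Delta>2 $ i $ s)"
          unfolding a_def b_def using y[of i s] d2[of i s] by (simp add: field_simps power2_eq_square)
        then have "sqrt (b i s / (2 * a i s)) = Y $ i $ s * sqrt (\<Delta>1 $ i $ s / \<Delta>2 $ i $ s)"
          unfolding \<open>b i s / (2 * a i s) = (Y $ i $ s)\<^sup>2 * (\<Delta>1 $ i $ s / \<Delta>2 $ i $ s)\<close> real_sqrt_mult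
          using y[of i s] by simp
        then show ?thesis unfolding Y_def by simp
      qed
      then show ?thesis unfolding Vs_def by (simp add: vec_eq_iff)
    qed
    have sm1: "Vs \<in> posorth" unfolding VsEq using sep_min(1)[of a b] apos bpos by blast
    have sm2: "sep a b Vs \<le> sep a b V" if "V \<in> posorth" for V
      unfolding VsEq using sep_min(2)[of a b V] apos bpos that by blast
    have sm3: "V = Vs" if "V \<in> posorth" "sep a b V \<le> sep a b Vs" for V
      using sep_min(3)[of a b V] apos bpos that unfolding VsEq by blast
    note sm = sm1 sm2 sm3
    show "Vs \<in> posorth \<and> (\<forall>V\<in>posorth. J Vs \<le> J V) \<and> (\<forall>V\<in>posorth. J V \<le> J Vs \<longrightarrow> V = Vs)"
    proof (intro conjI ballI impI)
      show "Vs \<in> posorth" by (rule sm(1))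
      fix V :: "real^'k^'n" assume V: "V \<in> posorth"
      show "J Vs \<le> J V" unfolding Jsep[OF V] Jsep[OF sm(1)] using sm(2)[OF V] by simp
      assume "J V \<le> J Vs"
      then show "V = Vs" unfolding Jsep[OF V] Jsep[OF sm(1)] using sm(3)[OF V] by simp
    qed
  qed
  show ?thesis
    unfolding Let_def \<Delta>1_def[symmetric] \<Delta>2_def[symmetric] Vs_def[symmetric]
    using P1 P2 cvx P4 unfolding J_def Y_def by blast
qed


end
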